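(* Let $A,B$ be nondeterministic parity tree automata over $\Sigma$, let $g$ be a guiding function from $B$ to $A$ that preserves acceptance, let $t$ be a $\Sigma$-tree, let $\rho_B$ be an accepting run of $B$ on $t$ and $\rho_A=g(\rho_B)$ (an accepting run of $A$ on $t$). Let $u\in\{0,1\}^*$ and $v\in\{0,1\}^+$ be such that $\rho_A(u)=\rho_A(u\cdot v)$ and $\rho_B(u)=\rho_B(u\cdot v)$. If the greatest priority on the edges of $\rho_B$ between positions $u$ and $u\cdot v$ (i.e., on the edges from $u\cdot v|_k$ to $u\cdot v|_{k+1}$ for $k<|v|$) is even, then the greatest priority on the corresponding edges of $\rho_A$ is even.
   Context: A $\Sigma$-tree is $t:\{0,1\}^*\to\Sigma$; $v|_k$ is the length-$k$ prefix of $v$. A nondeterministic $I$-parity tree automaton ($I$ a finite interval of naturals) is $(\Sigma,Q,q_I,\Delta,\Omega)$ with $Q$ finite, $\Delta\subseteq Q\times\Sigma\times Q\times Q$ complete, $\Omega:\Delta\to I^2$. A run on $t$ is $\rho:\{0,1\}^*\to\Delta$ with $\rho(\varepsilon)$ from $q_I$, $\rho(u)=(q,t(u),q_0,q_1)$ and $\rho(u\cdot d)$ from $q_d$; the edge from $u$ to $u\cdot d$ has priority the $d$-th component of $\Omega(\rho(u))$. A run is accepting if on every branch the $\limsup$ of edge priorities is even. A guiding function from $B$ to $A$ is $g:Q_A\times\Delta_B\to\Delta_A$ with $g(p,(q,a,q_0,q_1))=(p,a,p_0,p_1)$; for a run $\rho$ of $B$ on $t$, $g(\rho)(u)=g(s(u),\rho(u))=(s(u),t(u),p_0,p_1)$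 where $s(\varepsilon)=q_{I,A}$ and $s(u\cdot d)=p_d$. It preserves acceptance if $g(\rho)$ is accepting whenever $\rho$ is. *)

theory Defs
  imports Main
begin

text \<open>Tree positions in {0,1}^* are bool lists (False = direction 0, True = direction 1).
  A \<Sigma>-tree is a function bool list \<Rightarrow> 'a. Transitions are (q, a, q0, q1).\<close>

type_synonym ('q,'a) tr = "'q \<times> 'a \<times> 'q \<times> 'q"

record ('q,'a) pta =
  states :: "'q set"
  init :: 'q
  trans :: "('q,'a) tr set"
  pri :: "('q,'a) tr \<Rightarrow> nat \<times> nat"
  pmin :: nat
  pmax :: nat

definition tsrc :: "('q,'a) tr \<Rightarrow> 'q" where "tsrc \<delta> = fst \<delta>"
definition tlet :: "('q,'a) tr \<Rightarrow> 'a" where "tlet \<delta> = fst (snd \<delta>)"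
definition tsucc :: "('q,'a) tr \<Rightarrow> bool \<Rightarrow> 'q" where
  "tsucc \<delta> d = (if d then snd (snd (snd \<delta>)) else fst (snd (snd \<delta>)))"

definition is_pta :: "('q,'a) pta \<Rightarrow> bool" where
  "is_pta A \<longleftrightarrow> finite (states A) \<and> init A \<in> states A \<and> pmin A \<le> pmax A
    \<and> trans A \<subseteq> states A \<times> UNIV \<times> states A \<times> states A
    \<and> (\<forall>q\<in>states A. \<forall>a. \<exists>q0 q1. (q, a, q0, q1) \<in> trans A)
    \<and> (\<forall>\<delta>\<in>trans A. fst (pri A \<delta>) \<in> {pmin A..pmax A} \<and> snd (pri A \<delta>) \<in> {pmin A..pmax A})"

definition is_run :: "('q,'a) pta \<Rightarrow> (bool list \<Rightarrow> 'a) \<Rightarrow> (bool list \<Rightarrow> ('q,'a) tr) \<Rightarrow> bool" where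
  "is_run A t \<rho> \<longleftrightarrow> tsrc (\<rho> []) = init A
     \<and> (\<forall>u. \<rho> u \<in> trans A \<and> tlet (\<rho> u) = t u)
     \<and> (\<forall>u d. tsrc (\<rho> (u @ [d])) = tsucc (\<rho> u) d)"

definition edge_pri :: "('q,'a) pta \<Rightarrow> (bool list \<Rightarrow> ('q,'a) tr) \<Rightarrow> bool list \<Rightarrow> bool \<Rightarrow> nat" where
  "edge_pri A \<rho> u d = (if d then snd (pri A (\<rho> u)) else fst (pri A (\<rho> u)))"

definition branch_pris :: "('q,'a) pta \<Rightarrow> (bool list \<Rightarrow> ('q,'a) tr) \<Rightarrow> (nat \<Rightarrow> bool) \<Rightarrow> nat \<Rightarrow> nat" where
  "branch_pris A \<rho> b n = edge_pri A \<rho> (map b [0..<n]) (b n)"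

definition limsup_nat :: "(nat \<Rightarrow> nat) \<Rightarrow> nat" where
  "limsup_nat p = Max {m. \<exists>\<^sub>\<infinity>n. p n = m}"

definition accepting :: "('q,'a) pta \<Rightarrow> (bool list \<Rightarrow> ('q,'a) tr) \<Rightarrow> bool" where
  "accepting A \<rho> \<longleftrightarrow> (\<forall>b. even (limsup_nat (branch_pris A \<rho> b)))"

definition is_guiding :: "('p,'a) pta \<Rightarrow> ('q,'a) pta \<Rightarrow> ('p \<Rightarrow> ('q,'a) tr \<Rightarrow> ('p,'a) tr) \<Rightarrow> bool" where
  "is_guiding A B g \<longleftrightarrow> (\<forall>p\<in>states A. \<forall>\<delta>\<in>trans B.
      g p \<delta> \<in> trans A \<and> tsrc (g p \<delta>) = p \<and> tlet (g p \<delta>) = tlet \<delta>)"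

fun gstate_aux :: "('p \<Rightarrow> ('q,'a) tr \<Rightarrow> ('p,'a) tr) \<Rightarrow> (bool list \<Rightarrow> ('q,'a) tr) \<Rightarrow> 'p \<Rightarrow> bool list \<Rightarrow> bool list \<Rightarrow> 'p" where
  "gstate_aux g \<rho> q u [] = q"
| "gstate_aux g \<rho> q u (d # w) = gstate_aux g \<rho> (tsucc (g q (\<rho> u)) d) (u @ [d]) w"

definition gstate :: "('p,'a) pta \<Rightarrow> ('p \<Rightarrow> ('q,'a) tr \<Rightarrow> ('p,'a) tr) \<Rightarrow> (bool list \<Rightarrow> ('q,'a) tr) \<Rightarrow> bool list \<Rightarrow> 'p" where
  "gstate A g \<rho> u = gstate_aux g \<rho> (init A) [] u"

definition guided_run :: "('p,'a) pta \<Rightarrow> ('p \<Rightarrow> ('q,'a) tr \<Rightarrow> ('p,'a) tr) \<Rightarrow> (bool list \<Rightarrow> ('q,'a) tr) \<Rightarrow> bool list \<Rightarrow> ('p,'a) tr" where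
  "guided_run A g \<rho> u = g (gstate A g \<rho> u) (\<rho> u)"

definition preserves_acceptance :: "('p,'a) pta \<Rightarrow> ('q,'a) pta \<Rightarrow> ('p \<Rightarrow> ('q,'a) tr \<Rightarrow> ('p,'a) tr) \<Rightarrow> bool" where
  "preserves_acceptance A B g \<longleftrightarrow>
     (\<forall>t \<rho>. is_run B t \<rho> \<and> accepting B \<rho> \<longrightarrow> accepting A (guided_run A g \<rho>))"

definition seg_max :: "('q,'a) pta \<Rightarrow> (bool list \<Rightarrow> ('q,'a) tr) \<Rightarrow> bool list \<Rightarrow> bool list \<Rightarrow> nat" where
  "seg_max A \<rho> u v = Max ((\<lambda>k. edge_pri A \<rho> (u @ take k v) (v ! k)) ` {..<length v})"

end

theory Submission imports Defs "HOL-Library.Infinite_Set" begin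

function strip :: "bool list \<Rightarrow> bool list \<Rightarrow> bool list" where
  "strip v w = (if v \<noteq> [] \<and> take (length v) w = v then strip v (drop (length v) w) else w)"
  by auto
termination
proof (relation "measure (\<lambda>(v,w). length w)")
  fix v w :: "bool list"
  assume a: "v \<noteq> [] \<and> take (length v) w = v"
  then have "w \<noteq> []" by auto
  then show "((v, drop (length v) w), v, w) \<in> measure (\<lambda>(v, w). length w)"
    using a by simp
qed auto

declare strip.simps[simp del]

lemma strip_nil[simp]: "strip v [] = []"
  by (subst strip.simps) auto


definition VV :: "bool list \<Rightarrow> nat \<Rightarrow> bool list" where "VV v k = concat (replicate k v)"

lemma VV_len[simp]: "length (VV v k) = k * length v"
  unfolding VV_def by (induct k) auto

lemma VV_Suc: "VV v (Suc k) = VV v k @ v"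
  unfolding VV_def by (induct k) auto

lemma VV_add: "VV v (j + k) = VV v j @ VV v k"
  unfolding VV_def by (simp add: replicate_add)

lemma S1: "v \<noteq> [] \<Longrightarrow> strip v (v @ w) = strip v w"
  by (subst strip.simps) simp

lemma S1V: "v \<noteq> [] \<Longrightarrow> strip v (VV v k @ w) = strip v w"
  by (induct k) (auto simp: VV_def S1)

lemma S2: "v \<noteq> [] \<Longrightarrow> \<exists>k. w = VV v k @ strip v w"
proof (induction v w rule: strip.induct)
  case (1 v w)
  show ?case
  proof (cases "take (length v) w = v")
    case True
    then have w: "w = v @ drop (length v) w" by (metis append_take_drop_id)
    from 1 True obtain k where k: "drop (length v) w = VV v k @ strip v (drop (length v) w)" by blast
    have e: "strip v w = strip v (drop (length v) w)" using True 1(2) by (subst strip.simps) simp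
    have "w = v @ (VV v k @ strip v w)" using w k e by metis
    then have "w = VV v (Suc k) @ strip v w"
      by (metis VV_def append.assoc concat.simps(2) replicate_Suc)
    then show ?thesis by blast
  next
    case False
    then have "strip v w = w" by (subst strip.simps) simp
    then show ?thesis by (metis VV_def append_Nil concat.simps(1) replicate_0)
  qed
qed

lemma take_snoc: "take (length v) (w @ [d]) = v \<Longrightarrow> take (length v) w = v \<or> w @ [d] = v"
  by (cases "length v \<le> length w") (auto simp: take_append)

lemma S4: "v \<noteq> [] \<Longrightarrow> strip v (w @ [d]) = (if strip v w @ [d] = v then [] else strip v w @ [d])"
proof (induction v w rule: strip.induct)
  case (1 v w)
  show ?case
  proof (cases "take (length v) w = v")
    case True
    define w' where "w' = drop (length v) w"
    have w: "w = v @ w'" unfolding w'_def using True by (metis append_take_drop_id)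
    have IH: "strip v (w' @ [d]) = (if strip v w' @ [d] = v then [] else strip v w' @ [d])"
      using 1 True unfolding w'_def by blast
    have a: "strip v w = strip v w'" unfolding w using S1[OF 1(2)] by blast
    have b: "strip v (w @ [d]) = strip v (w' @ [d])" unfolding w using S1[OF 1(2), of "w' @ [d]"] by simp
    show ?thesis by (simp only: a b IH)
  next
    case False
    then have a: "strip v w = w" by (subst strip.simps) simp
    show ?thesis
    proof (cases "w @ [d] = v")
      case True
      then have "strip v (w @ [d]) = strip v []" using 1(2) by (subst strip.simps) simp
      also have "\<dots> = []" by simp
      finally show ?thesis using a True by simp
    next
      case F2: False
      then have "take (length v) (w @ [d]) \<noteq> v" using False take_snoc[of v w d] by blast
      then have "strip v (w @ [d]) = w @ [d]" by (subst strip.simps) simp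
      then show ?thesis using a F2 by simp
    qed
  qed
qed

lemma S5: "i < length v \<Longrightarrow> strip v (take i v) = take i v"
  by (subst strip.simps) auto

definition pf :: "bool list \<Rightarrow> bool list \<Rightarrow> bool list \<Rightarrow> bool list" where
  "pf u v x = (if take (length u) x = u then u @ strip v (drop (length u) x) else x)"

lemma pf_nil: "pf u v [] = []"
  unfolding pf_def by (cases u) auto

lemma pf_step: assumes "v \<noteq> []"
  shows "pf u v (x @ [d]) = pf u v x @ [d] \<or>
    (pf u v (x @ [d]) = u \<and> pf u v x @ [d] = u @ v \<and> (\<exists>k. x @ [d] = u @ VV v (Suc k)))"
proof (cases "take (length u) x = u")
  case True
  then have x: "x = u @ drop (length u) x" by (metis append_take_drop_id)
  have lx: "length u \<le> length x" using arg_cong[OF x, of length] by simp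
  have t2: "take (length u) (x @ [d]) = u" using True lx by (simp add: take_append)
  have d2: "drop (length u) (x @ [d]) = drop (length u) x @ [d]" using True
    by (metis append.assoc append_eq_conv_conj x)
  obtain k where k: "drop (length u) x = VV v k @ strip v (drop (length u) x)" using S2 assms by blast
  show ?thesis
  proof (cases "strip v (drop (length u) x) @ [d] = v")
    case True2: True
    have xk: "x @ [d] = u @ VV v (Suc k)" using x k True2 VV_Suc
      by (metis append.assoc)
    have p1: "pf u v (x @ [d]) = u" unfolding pf_def
      using t2 d2 S4[OF assms, of "drop (length u) x" d] True2 by simp
    have p2: "pf u v x @ [d] = u @ v" unfolding pf_def using True True2 by simp
    show ?thesis using xk p1 p2 by blast
  next
    case False
    then show ?thesis using True t2 d2 S4[OF assms] unfolding pf_def by auto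
  qed
next
  case False
  show ?thesis
  proof (cases "x @ [d] = u")
    case True
    then show ?thesis using False unfolding pf_def by auto
  next
    case F2: False
    then have "take (length u) (x @ [d]) \<noteq> u" using False take_snoc[of u x d] by blast
    then show ?thesis using False unfolding pf_def by auto
  qed
qed

lemma pf_phi: assumes "v \<noteq> []" "\<phi> u = \<phi> (u @ v)"
  shows "\<phi> (pf u v (x @ [d])) = \<phi> (pf u v x @ [d])"
  using pf_step[OF assms(1), of u x d] assms(2) by auto


lemma gaux_snoc: "gstate_aux g \<rho> q u (w @ [d]) = tsucc (g (gstate_aux g \<rho> q u w) (\<rho> (u @ w))) d"
  by (induct w arbitrary: q u) auto

lemma gstate_snoc: "gstate A g \<rho> (x @ [d]) = tsucc (guided_run A g \<rho> x) d"
  unfolding gstate_def guided_run_def by (simp add: gaux_snoc)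

lemma gstate_nil: "gstate A g \<rho> [] = init A"
  unfolding gstate_def by simp

lemma gstate_states:
  assumes "is_pta A" "is_guiding A B g" "\<forall>x. \<rho> x \<in> trans B"
  shows "gstate A g \<rho> x \<in> states A"
proof (induction x rule: rev_induct)
  case Nil
  have "init A \<in> states A" using assms(1) unfolding is_pta_def by (elim conjE) assumption
  then show ?case by (simp add: gstate_nil)
next
  case (snoc d x)
  obtain p a p0 p1 where e: "guided_run A g \<rho> x = (p, a, p0, p1)" by (cases "guided_run A g \<rho> x") auto
  have tA: "trans A \<subseteq> states A \<times> UNIV \<times> states A \<times> states A"
    using assms(1) unfolding is_pta_def by (elim conjE) assumption
  have "guided_run A g \<rho> x \<in> trans A" using assms(2,3) snoc unfolding is_guiding_def guided_run_def by blast
  then have "(p, a, p0, p1) \<in> states A \<times> UNIV \<times> states A \<times> states A" using tA e by auto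
  then have "p0 \<in> states A \<and> p1 \<in> states A" by simp
  then show ?case by (simp add: gstate_snoc e tsucc_def)
qed

lemma gstate_pf:
  assumes v: "v \<noteq> []" and A: "is_pta A" and G: "is_guiding A B g" and R: "\<forall>x. \<rho> x \<in> trans B"
    and eq: "guided_run A g \<rho> u = guided_run A g \<rho> (u @ v)"
  shows "gstate A g (\<lambda>x. \<rho> (pf u v x)) x = gstate A g \<rho> (pf u v x)"
proof -
  have src: "tsrc (guided_run A g \<rho> y) = gstate A g \<rho> y" for y
    using gstate_states[OF A G R, of y] G R unfolding is_guiding_def guided_run_def by blast
  have gu: "gstate A g \<rho> u = gstate A g \<rho> (u @ v)" using src[of u] src[of "u @ v"] eq by simp
  show ?thesis
  proof (induction x rule: rev_induct)
    case Nil
    then show ?case by (simp add: gstate_nil pf_nil)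
  next
    case (snoc d x)
    have "gstate A g (\<lambda>x. \<rho> (pf u v x)) (x @ [d]) = tsucc (g (gstate A g \<rho> (pf u v x)) (\<rho> (pf u v x))) d"
      using snoc by (simp add: gstate_snoc guided_run_def)
    also have "\<dots> = gstate A g \<rho> (pf u v x @ [d])" by (simp add: gstate_snoc guided_run_def)
    also have "\<dots> = gstate A g \<rho> (pf u v (x @ [d]))"
      using pf_phi[of v "gstate A g \<rho>" u x d, OF v gu] by simp
    finally show ?case .
  qed
qed

lemma guided_pf:
  assumes "v \<noteq> []" "is_pta A" "is_guiding A B g" "\<forall>x. \<rho> x \<in> trans B"
    "guided_run A g \<rho> u = guided_run A g \<rho> (u @ v)"
  shows "guided_run A g (\<lambda>x. \<rho> (pf u v x)) = (\<lambda>x. guided_run A g \<rho> (pf u v x))"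
  using gstate_pf[OF assms] unfolding guided_run_def by auto

lemma run_pf:
  assumes v: "v \<noteq> []" and R: "is_run B t \<rho>" and eq: "\<rho> u = \<rho> (u @ v)"
  shows "is_run B (\<lambda>x. t (pf u v x)) (\<lambda>x. \<rho> (pf u v x))"
proof -
  have "tsrc (\<rho> (pf u v (x @ [d]))) = tsucc (\<rho> (pf u v x)) d" for x d
    using pf_phi[of v \<rho> u x d, OF v eq] R unfolding is_run_def by metis
  then show ?thesis using R unfolding is_run_def by (simp add: pf_nil)
qed

lemma infm_shift: fixes p :: "nat \<Rightarrow> 'b" shows "(INFM n. p (n + k) = m) = (INFM n. p n = m)"
  unfolding INFM_nat
proof (intro iffI allI)
  fix a assume h: "\<forall>a. \<exists>n>a. p (n + k) = m"
  then obtain n where "n > a" "p (n + k) = m" by blast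
  then show "\<exists>n>a. p n = m" by (intro exI[of _ "n + k"]) auto
next
  fix a assume h: "\<forall>a. \<exists>n>a. p n = m"
  then obtain n where "n > a + k" "p n = m" by blast
  then show "\<exists>n>a. p (n + k) = m" by (intro exI[of _ "n - k"]) auto
qed

lemma limsup_shift: fixes p :: "nat \<Rightarrow> nat" shows "limsup_nat (\<lambda>n. p (n + k)) = limsup_nat p"
  unfolding limsup_nat_def using infm_shift[of p k] by simp

lemma limsup_periodic:
  assumes L: "(L::nat) > 0"
  shows "limsup_nat (\<lambda>m. h (m mod L)) = Max (h ` {..<L})"
proof -
  have "{x. INFM m. h (m mod L) = x} = h ` {..<L}"
  proof (intro equalityI subsetI)
    fix x assume "x \<in> {x. INFM m. h (m mod L) = x}"
    then obtain m where "h (m mod L) = x" by (auto elim: INFM_E)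
    then show "x \<in> h ` {..<L}" using L by auto
  next
    fix x assume "x \<in> h ` {..<L}"
    then obtain i where i: "i < L" "x = h i" by auto
    have "\<exists>n>a. h (n mod L) = x" for a
    proof (intro exI conjI)
      have "1 * (a + 1) \<le> L * (a + 1)" using L by (intro mult_le_mono1) simp
      then show "i + L * (a + 1) > a" by simp
      have "(i + L * (a + 1)) mod L = i" using i by (metis mod_less mod_mult_self2)
      then show "h ((i + L * (a + 1)) mod L) = x" using i by simp
    qed
    then show "x \<in> {x. INFM m. h (m mod L) = x}" unfolding INFM_nat by blast
  qed
  then show ?thesis unfolding limsup_nat_def by simp
qed

lemma edge_pf: "edge_pri C (\<lambda>x. \<rho> (pf u v x)) y d = edge_pri C \<rho> (pf u v y) d"
  unfolding edge_pri_def by simp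


lemma VV_nth: "i < k * length v \<Longrightarrow> VV v k ! i = v ! (i mod length v)"
proof (induct k arbitrary: i)
  case 0
  then show ?case by simp
next
  case (Suc k)
  have e: "VV v (Suc k) = v @ VV v k" unfolding VV_def by simp
  show ?case
  proof (cases "i < length v")
    case True
    then show ?thesis unfolding e by (simp add: nth_append)
  next
    case False
    then have "i - length v < k * length v" using Suc(2) by simp
    then have "VV v k ! (i - length v) = v ! ((i - length v) mod length v)" using Suc(1) by blast
    moreover have "(i - length v) mod length v = i mod length v" using False le_mod_geq[of "length v" i] by simp
    ultimately show ?thesis unfolding e using False by (simp add: nth_append)
  qed
qed

lemma periodic_branch:
  assumes v: "v \<noteq> []" and P: "\<forall>j. map b [0..<length u + j * length v] = u @ VV v j"
  shows "limsup_nat (branch_pris C (\<lambda>x. \<rho> (pf u v x)) b) = seg_max C \<rho> u v"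
proof -
  let ?n = "length v"
  have key: "pf u v (map b [0..<length u + m]) = u @ take (m mod ?n) v \<and> b (length u + m) = v ! (m mod ?n)" for m
  proof -
    define q where "q = m div ?n"
    define i where "i = m mod ?n"
    have m: "m = q * ?n + i" unfolding q_def i_def by simp
    have i: "i < ?n" unfolding i_def using v by simp
    have E: "map b [0..<length u + Suc q * ?n] = u @ VV v q @ v"
      using spec[OF P, of "Suc q"] VV_Suc[of v q] by simp
    have le: "length u + m < length u + Suc q * ?n" using m i by simp
    have T: "map b [0..<length u + m] = take (length u + m) (map b [0..<length u + Suc q * ?n])"
      using le by (simp add: take_map)
    have T2: "take (length u + m) (u @ VV v q @ v) = u @ VV v q @ take i v" using m by simp
    have M: "map b [0..<length u + m] = u @ VV v q @ take i v" using T E T2 by simp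
    have pf: "pf u v (map b [0..<length u + m]) = u @ take i v"
      unfolding M pf_def using S1V[OF v] S5[OF i] by simp
    have "b (length u + m) = map b [0..<length u + Suc q * ?n] ! (length u + m)"
      using le by simp
    also have "\<dots> = (u @ VV v q @ v) ! (length u + m)" using E by simp
    also have "\<dots> = v ! i" using m by (simp add: nth_append)
    finally show ?thesis using pf unfolding i_def by simp
  qed
  define h where "h k = edge_pri C \<rho> (u @ take k v) (v ! k)" for k
  have f: "(\<lambda>m. branch_pris C (\<lambda>x. \<rho> (pf u v x)) b (m + length u)) = (\<lambda>m. h (m mod ?n))"
  proof
    fix m
    have "branch_pris C (\<lambda>x. \<rho> (pf u v x)) b (m + length u)
        = edge_pri C \<rho> (pf u v (map b [0..<length u + m])) (b (length u + m))"
      unfolding branch_pris_def edge_pf by (simp add: add.commute)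
    also have "\<dots> = h (m mod ?n)" using key[of m] unfolding h_def by simp
    finally show "branch_pris C (\<lambda>x. \<rho> (pf u v x)) b (m + length u) = h (m mod ?n)" .
  qed
  have "limsup_nat (branch_pris C (\<lambda>x. \<rho> (pf u v x)) b)
      = limsup_nat (\<lambda>m. branch_pris C (\<lambda>x. \<rho> (pf u v x)) b (m + length u))"
    using limsup_shift[of "branch_pris C (\<lambda>x. \<rho> (pf u v x)) b" "length u"] by simp
  also have "\<dots> = Max (h ` {..<?n})" unfolding f using limsup_periodic v by simp
  also have "\<dots> = seg_max C \<rho> u v" unfolding seg_max_def h_def by simp
  finally show ?thesis .
qed

lemma nonperiodic_branch:
  assumes v: "v \<noteq> []" and NP: "map b [0..<length u + j * length v] \<noteq> u @ VV v j"
  shows "\<exists>b'. limsup_nat (branch_pris C (\<lambda>x. \<rho> (pf u v x)) b) = limsup_nat (branch_pris C \<rho> b')"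
proof -
  define N where "N = length u + j * length v"
  have nw: "pf u v (map b [0..<Suc n]) = pf u v (map b [0..<n]) @ [b n]" if n: "N \<le> n" for n
  proof (rule ccontr)
    assume ne: "pf u v (map b [0..<Suc n]) \<noteq> pf u v (map b [0..<n]) @ [b n]"
    have s: "map b [0..<Suc n] = map b [0..<n] @ [b n]" by simp
    from pf_step[OF v, of u "map b [0..<n]" "b n"] ne s
    obtain k where k: "map b [0..<Suc n] = u @ VV v (Suc k)" by auto
    have len: "Suc n = length u + Suc k * length v" using arg_cong[OF k, of length] by simp
    have "j * length v < Suc k * length v" using len n unfolding N_def by simp
    then have "j < Suc k" using mult_less_cancel2[of j "length v" "Suc k"] by blast
    then have jk: "j \<le> Suc k" by simp
    have r: "VV v (Suc k) = VV v j @ VV v (Suc k - j)" using VV_add[of v j "Suc k - j"] jk by simp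
    have "map b [0..<N] = take N (map b [0..<Suc n])" using n by (simp add: take_map)
    also have "\<dots> = u @ VV v j" unfolding k r N_def by simp
    finally show False using NP unfolding N_def by simp
  qed
  define w0 where "w0 = pf u v (map b [0..<N])"
  define L where "L = length w0"
  define b' where "b' m = (if m < L then w0 ! m else b (N + (m - L)))" for m
  have ind: "pf u v (map b [0..<N + m]) = map b' [0..<L + m]" for m
  proof (induction m)
    case 0
    have "map b' [0..<L] = w0" by (rule nth_equalityI) (simp_all add: L_def b'_def)
    then show ?case by (simp add: w0_def)
  next
    case (Suc m)
    have "pf u v (map b [0..<N + Suc m]) = pf u v (map b [0..<Suc (N + m)])" by simp
    also have "\<dots> = pf u v (map b [0..<N + m]) @ [b (N + m)]" using nw[of "N + m"] by simp
    also have "\<dots> = map b' [0..<L + m] @ [b' (L + m)]" using Suc by (simp add: b'_def)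
    also have "\<dots> = map b' [0..<L + Suc m]" by simp
    finally show ?case .
  qed
  have f: "(\<lambda>m. branch_pris C (\<lambda>x. \<rho> (pf u v x)) b (m + N)) = (\<lambda>m. branch_pris C \<rho> b' (m + L))"
  proof
    fix m
    have bb: "b (m + N) = b' (m + L)" by (simp add: b'_def add.commute)
    have "branch_pris C (\<lambda>x. \<rho> (pf u v x)) b (m + N) = edge_pri C \<rho> (pf u v (map b [0..<N + m])) (b (m + N))"
      unfolding branch_pris_def edge_pf by (simp add: add.commute)
    also have "\<dots> = edge_pri C \<rho> (map b' [0..<L + m]) (b' (m + L))" using ind[of m] bb by simp
    also have "\<dots> = branch_pris C \<rho> b' (m + L)" unfolding branch_pris_def by (simp add: add.commute)
    finally show "branch_pris C (\<lambda>x. \<rho> (pf u v x)) b (m + N) = branch_pris C \<rho> b' (m + L)" .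
  qed
  have "limsup_nat (branch_pris C (\<lambda>x. \<rho> (pf u v x)) b) = limsup_nat (branch_pris C \<rho> b')"
    using limsup_shift[of "branch_pris C (\<lambda>x. \<rho> (pf u v x)) b" N]
      limsup_shift[of "branch_pris C \<rho> b'" L] f by simp
  then show ?thesis by blast
qed

lemma periodic_c:
  assumes v: "v \<noteq> []"
  shows "map (\<lambda>n. if n < length u then u ! n else v ! ((n - length u) mod length v))
      [0..<length u + j * length v] = u @ VV v j"
proof (rule nth_equalityI)
  show "length (map (\<lambda>n. if n < length u then u ! n else v ! ((n - length u) mod length v))
      [0..<length u + j * length v]) = length (u @ VV v j)" by simp
next
  fix i assume i: "i < length (map (\<lambda>n. if n < length u then u ! n else v ! ((n - length u) mod length v))
      [0..<length u + j * length v])"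
  show "map (\<lambda>n. if n < length u then u ! n else v ! ((n - length u) mod length v))
      [0..<length u + j * length v] ! i = (u @ VV v j) ! i"
  proof (cases "i < length u")
    case True
    then show ?thesis using i by (simp add: nth_append)
  next
    case False
    then have "i - length u < j * length v" using i by simp
    then show ?thesis using i False by (simp add: nth_append VV_nth)
  qed
qed

theorem lemma1:
  fixes A :: "('p,'a) pta" and B :: "('q,'a) pta"
    and g :: "'p \<Rightarrow> ('q,'a) tr \<Rightarrow> ('p,'a) tr"
    and t :: "bool list \<Rightarrow> 'a" and \<rho>B :: "bool list \<Rightarrow> ('q,'a) tr"
    and u v :: "bool list"
  assumes "is_pta A" and "is_pta B"
    and "is_guiding A B g" and "preserves_acceptance A B g"
    and "is_run B t \<rho>B" and "accepting B \<rho>B"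
    and "v \<noteq> []"
    and "guided_run A g \<rho>B u = guided_run A g \<rho>B (u @ v)"
    and "\<rho>B u = \<rho>B (u @ v)"
    and "even (seg_max B \<rho>B u v)"
  shows "even (seg_max A (guided_run A g \<rho>B) u v)"
proof -
  have v: "v \<noteq> []" by fact
  have R: "\<forall>x. \<rho>B x \<in> trans B" using assms(5) unfolding is_run_def by blast
  have run': "is_run B (\<lambda>x. t (pf u v x)) (\<lambda>x. \<rho>B (pf u v x))"
    by (rule run_pf[OF v assms(5) assms(9)])
  have acc': "accepting B (\<lambda>x. \<rho>B (pf u v x))"
    unfolding accepting_def
  proof
    fix b
    show "even (limsup_nat (branch_pris B (\<lambda>x. \<rho>B (pf u v x)) b))"
    proof (cases "\<forall>j. map b [0..<length u + j * length v] = u @ VV v j")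
      case True
      then show ?thesis using periodic_branch[OF v True, of B \<rho>B] assms(10) by simp
    next
      case False
      then obtain j where "map b [0..<length u + j * length v] \<noteq> u @ VV v j" by blast
      from nonperiodic_branch[OF v this, of B \<rho>B] obtain b' where
        "limsup_nat (branch_pris B (\<lambda>x. \<rho>B (pf u v x)) b) = limsup_nat (branch_pris B \<rho>B b')" by blast
      then show ?thesis using assms(6) unfolding accepting_def by metis
    qed
  qed
  have accA: "accepting A (guided_run A g (\<lambda>x. \<rho>B (pf u v x)))"
    using assms(4) run' acc' unfolding preserves_acceptance_def by blast
  have gq: "guided_run A g (\<lambda>x. \<rho>B (pf u v x)) = (\<lambda>x. guided_run A g \<rho>B (pf u v x))"
    by (rule guided_pf[OF v assms(1) assms(3) R assms(8)])
  define c where "c n = (if n < length u then u ! n else v ! ((n - length u) mod length v))" for n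
  have P: "\<forall>j. map c [0..<length u + j * length v] = u @ VV v j"
    using periodic_c[OF v, of u] unfolding c_def by blast
  have "limsup_nat (branch_pris A (\<lambda>x. guided_run A g \<rho>B (pf u v x)) c) = seg_max A (guided_run A g \<rho>B) u v"
    by (rule periodic_branch[OF v P])
  then show ?thesis using accA gq unfolding accepting_def by metis
qed

end
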